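(* Fix $c\in(0,1/2)$. Each of the following classes $\mathbb D$ of distributions on $\mathbb R^d\times\mathbb R$ satisfies Condition 3 with constant $c$: (1) (Polynomial log-densities) the class of distributions $\mathcal P$ with $\mathrm{supp}(\mathcal P_X)=\mathbb R^d$ and otherwise arbitrary $x$-marginal $\mathcal P_X$, whose conditional density satisfies $\mathcal P(y\mid x)\propto e^{f_{\mathcal P}(x,y)}$ for some polynomial $f_{\mathcal P}$ in $(x,y)$ (with $\int e^{f_{\mathcal P}(x,y)}dy<\infty$ for all $x$); (2) (Polynomial expectations) the class of distributions $\mathcal P$ with $\mathrm{supp}(\mathcal P_X)=\mathbb R^d$ and otherwise arbitrary $x$-marginal, such that $\mathbb E_{(x,y)\sim\mathcal P}[y\mid X=x]=f_{\mathcal P}(x)$ for some polynomial $f_{\mathcal P}$.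
   Context: For a distribution $\mathcal P$ with density on $\mathbb R^d\times\mathbb R$, $\mathcal P(x,y)$ denotes its density, $\mathcal P_X$ its $x$-marginal and $\mathcal P(y\mid x)$ its conditional density. $\mathrm{vol}$ denotes Lebesgue measure. Condition 3 (constant $c$): for all $\mathcal P,\mathcal Q\in\mathbb D$ with $\mathbb E_{(x,y)\sim\mathcal P}[y]\neq\mathbb E_{(x,y)\sim\mathcal Q}[y]$, either $\mathcal P_X\neq\mathcal Q_X$, or there is no set $S\subseteq\mathbb R^d$ with $\mathrm{vol}(S)\ge c$ such that $\mathcal P(x,y)=\mathcal Q(x,y)$ for all $(x,y)\in S\times\mathbb R$. *)

theory Defs
  imports "HOL-Analysis.Analysis"
begin

text \<open>A distribution on R^d x R with a density is represented by its joint density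
  function p :: real^'d x real => real (w.r.t. Lebesgue measure on R^(d+1)).\<close>

definition is_density :: "((real^'d::finite) \<times> real \<Rightarrow> real) \<Rightarrow> bool" where
  "is_density p \<longleftrightarrow> p \<in> borel_measurable borel \<and> (\<forall>z. 0 \<le> p z) \<and>
     (\<integral>\<^sup>+ z. ennreal (p z) \<partial>lborel) = 1"

definition marg :: "((real^'d::finite) \<times> real \<Rightarrow> real) \<Rightarrow> (real^'d::finite) \<Rightarrow> real" where
  "marg p x = (\<integral> y. p (x, y) \<partial>lborel)"

definition marg_measure :: "((real^'d::finite) \<times> real \<Rightarrow> real) \<Rightarrow> (real^'d::finite) measure" where
  "marg_measure p = density lborel (\<lambda>x. ennreal (marg p x))"

definition cond_dens :: "((real^'d::finite) \<times> real \<Rightarrow> real) \<Rightarrow> (real^'d::finite) \<Rightarrow> real \<Rightarrow> real" where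
  "cond_dens p x y = p (x, y) / marg p x"

definition expect_y :: "((real^'d::finite) \<times> real \<Rightarrow> real) \<Rightarrow> real" where
  "expect_y p = (\<integral> z. snd z * p z \<partial>lborel)"

definition has_expect_y :: "((real^'d::finite) \<times> real \<Rightarrow> real) \<Rightarrow> bool" where
  "has_expect_y p \<longleftrightarrow> integrable lborel (\<lambda>z. snd z * p z)"

definition condition3 :: "real \<Rightarrow> ((real^'d::finite) \<times> real \<Rightarrow> real) set \<Rightarrow> bool" where
  "condition3 c D \<longleftrightarrow>
     (\<forall>P\<in>D. \<forall>Q\<in>D. has_expect_y P \<and> has_expect_y Q \<and> expect_y P \<noteq> expect_y Q \<longrightarrow>
        marg_measure P \<noteq> marg_measure Q \<or>
        \<not> (\<exists>S \<in> sets lebesgue. emeasure lebesgue S \<ge> ennreal c \<and>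
              (\<forall>x\<in>S. \<forall>y. P (x, y) = Q (x, y))))"

definition poly_logdens_class :: "((real^'d::finite) \<times> real \<Rightarrow> real) set" where
  "poly_logdens_class = {p. is_density p \<and> (\<forall>x. 0 < marg p x) \<and>
     (\<exists>f k. real_polynomial_function f \<and>
        (\<forall>x. integrable lborel (\<lambda>y. exp (f (x, y)))) \<and>
        (\<forall>x y. cond_dens p x y = k x * exp (f (x, y))))}"

definition poly_expect_class :: "((real^'d::finite) \<times> real \<Rightarrow> real) set" where
  "poly_expect_class = {p. is_density p \<and> (\<forall>x. 0 < marg p x) \<and>
     (\<exists>f :: (real^'d::finite) \<Rightarrow> real. real_polynomial_function f \<and>
        (\<forall>x. integrable lborel (\<lambda>y. y * cond_dens p x y) \<and>
             (\<integral> y. y * cond_dens p x y \<partial>lborel) = f x))}"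

end

theory Submission
  imports Defs
begin

lemma emeasure_lebesgue_borel:
  fixes A :: "'a::euclidean_space set"
  assumes "A \<in> sets borel"
  shows "emeasure lebesgue A = emeasure lborel A"
  using assms by (simp add: emeasure_completion main_part_sets)

lemma sum_zero_pow: "(\<Sum>i\<le>n. c i * (0::real) ^ i) = c 0"
  by (induction n) auto

lemma poly_line_finite_roots:
  fixes p :: "'a::euclidean_space \<Rightarrow> real"
  assumes p: "real_polynomial_function p" and pa: "p a \<noteq> 0"
  shows "finite {t::real. p (a + t *\<^sub>R v) = 0}"
proof -
  have "polynomial_function (\<lambda>t::real. a + t *\<^sub>R v)"
    by (rule polynomial_function_add[OF polynomial_function_const polynomial_function_mult[OF polynomial_function_id polynomial_function_const]])
  then have "real_polynomial_function (p \<circ> (\<lambda>t::real. a + t *\<^sub>R v))"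
    using p by (rule real_polynomial_function_compose)
  then have "real_polynomial_function (\<lambda>t::real. p (a + t *\<^sub>R v))"
    by (simp add: comp_def)
  then obtain c n where cn: "(\<lambda>t. p (a + t *\<^sub>R v)) = (\<lambda>t. \<Sum>i\<le>n. c i * t ^ i)"
    using real_polynomial_function_imp_sum by blast
  have "p (a + 0 *\<^sub>R v) = (\<Sum>i\<le>n. c i * 0 ^ i)"
    using fun_cong[OF cn, of 0] .
  then have "c 0 = p a"
    by (simp only: sum_zero_pow) simp
  then have "finite {t::real. (\<Sum>i\<le>n. c i * t ^ i) = 0}"
    using pa by (intro polyfun_roots_finite[of c 0]) auto
  moreover have "\<And>t. p (a + t *\<^sub>R v) = (\<Sum>i\<le>n. c i * t ^ i)"
    using cn by (rule fun_cong)
  ultimately show ?thesis by simp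
qed

lemma poly_zero_pos_measure:
  fixes p :: "'a::euclidean_space \<Rightarrow> real"
  assumes p: "real_polynomial_function p" and S: "S \<in> sets lebesgue"
    and Spos: "emeasure lebesgue S > 0" and Sz: "\<forall>x\<in>S. p x = 0"
  shows "p x = 0"
proof (rule ccontr)
  assume "p x \<noteq> 0"
  define a where "a = x"
  have pa: "p a \<noteq> 0" using \<open>p x \<noteq> 0\<close> a_def by simp
  have contp: "continuous_on UNIV p"
    using continuous_real_polymonial_function[OF p] by (simp add: continuous_at_imp_continuous_on)
  define Z where "Z = {x. p x = 0}"
  have "closed Z" unfolding Z_def using contp
    by (intro closed_Collect_eq) auto
  then have Zb: "Z \<in> sets borel" by simp
  have "emeasure lebesgue S \<le> emeasure lebesgue Z"
    using S Sz Zb by (intro emeasure_mono) (auto simp: Z_def)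
  then have Zpos: "emeasure lebesgue Z > 0" using Spos by simp
  define h where "h = (\<lambda>(t::real, x::'a). p (a + t *\<^sub>R (x - a)))"
  have conth: "continuous_on UNIV h"
    unfolding h_def split_def
    by (intro continuous_on_compose2[OF contp]) (auto intro!: continuous_intros)
  define W where "W = {z. h z = 0}"
  have "closed W" unfolding W_def using conth
    by (intro closed_Collect_eq) auto
  then have Wb: "W \<in> sets borel" by simp
  have meas: "(\<lambda>(t,x). indicator W (t,x) :: ennreal) \<in> borel_measurable (lborel \<Otimes>\<^sub>M lborel)"
    unfolding lborel_prod using Wb by (simp add: split_beta')
  have "(\<integral>\<^sup>+ x. (\<integral>\<^sup>+ t. indicator W (t,x) \<partial>lborel) \<partial>lborel) =
        (\<integral>\<^sup>+ t. (\<integral>\<^sup>+ x. indicator W (t,x) \<partial>lborel) \<partial>(lborel::real measure))"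
    using lborel_pair.Fubini'[OF meas] by simp
  moreover have "(\<integral>\<^sup>+ x. (\<integral>\<^sup>+ t. indicator W (t,x) \<partial>lborel) \<partial>(lborel::'a measure)) = 0"
  proof -
    have "(\<integral>\<^sup>+ t. indicator W (t,x) \<partial>lborel) = 0" for x
    proof -
      have eq: "(\<lambda>t. indicator W (t,x) :: ennreal) = indicator {t. p (a + t *\<^sub>R (x - a)) = 0}"
        by (auto simp: W_def h_def indicator_def)
      have fin: "finite {t::real. p (a + t *\<^sub>R (x - a)) = 0}"
        by (rule poly_line_finite_roots[OF p pa])
      have "{t::real. p (a + t *\<^sub>R (x - a)) = 0} \<in> sets lborel"
        using fin by (simp add: finite_imp_closed)
      then show ?thesis unfolding eq
        using fin by (simp add: emeasure_lborel_countable countable_finite)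
    qed
    then show ?thesis by simp
  qed
  moreover have "(\<integral>\<^sup>+ t. (\<integral>\<^sup>+ x. indicator W (t,x) \<partial>lborel) \<partial>(lborel::real measure)) > 0"
  proof -
    have pos: "(\<integral>\<^sup>+ x. indicator W (t,x) \<partial>lborel) > 0" if t: "t \<noteq> 0" for t :: real
    proof -
      define sl where "sl = {x. p (a + t *\<^sub>R (x - a)) = 0}"
      have eq: "(\<lambda>x. indicator W (t,x) :: ennreal) = indicator sl"
        by (auto simp: W_def h_def sl_def indicator_def)
      have slc: "closed sl" unfolding sl_def
        by (intro closed_Collect_eq continuous_on_compose2[OF contp]) (auto intro!: continuous_intros)
      have img: "sl = (\<lambda>z. (1/t) *\<^sub>R z + (a - (1/t) *\<^sub>R a)) ` Z"
      proof -
        have "x \<in> sl \<longleftrightarrow> (\<exists>z\<in>Z. x = (1/t) *\<^sub>R z + (a - (1/t) *\<^sub>R a))" for x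
        proof
          assume "x \<in> sl"
          then show "\<exists>z\<in>Z. x = (1/t) *\<^sub>R z + (a - (1/t) *\<^sub>R a)"
          proof (intro bexI[of _ "a + t *\<^sub>R (x - a)"])
            show "x = (1/t) *\<^sub>R (a + t *\<^sub>R (x - a)) + (a - (1/t) *\<^sub>R a)"
              using t by (simp add: scaleR_add_right scaleR_diff_right)
            show "a + t *\<^sub>R (x - a) \<in> Z" using \<open>x \<in> sl\<close> by (simp add: sl_def Z_def)
          qed
        next
          assume "\<exists>z\<in>Z. x = (1/t) *\<^sub>R z + (a - (1/t) *\<^sub>R a)"
          then obtain z where "z \<in> Z" "x = (1/t) *\<^sub>R z + (a - (1/t) *\<^sub>R a)" by blast
          moreover have "a + t *\<^sub>R ((1/t) *\<^sub>R z + (a - (1/t) *\<^sub>R a) - a) = z"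
            using t by (simp add: scaleR_add_right scaleR_diff_right)
          ultimately show "x \<in> sl" by (simp add: sl_def Z_def)
        qed
        then show ?thesis by blast
      qed
      have "emeasure lebesgue sl = ennreal (\<bar>1/t\<bar> ^ DIM('a)) * emeasure lebesgue Z"
        unfolding img by (rule emeasure_lebesgue_affine)
      moreover have "ennreal (\<bar>1/t\<bar> ^ DIM('a)) > 0" using t by simp
      ultimately have "emeasure lebesgue sl > 0" using Zpos
        by (simp add: ennreal_zero_less_mult_iff)
      then have "emeasure lborel sl > 0"
        using slc by (simp add: emeasure_lebesgue_borel)
      then show ?thesis unfolding eq using slc by simp
    qed
    have m2: "(\<lambda>t. \<integral>\<^sup>+ x. indicator W (t,x) \<partial>lborel) \<in> borel_measurable (lborel::real measure)"
      using meas by measurable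
    show ?thesis
    proof (rule ccontr)
      assume "\<not> ?thesis"
      then have "(\<integral>\<^sup>+ t. (\<integral>\<^sup>+ x. indicator W (t,x) \<partial>lborel) \<partial>(lborel::real measure)) = 0"
        by (simp add: not_gr_zero)
      then have "AE t in lborel. (\<integral>\<^sup>+ x. indicator W (t,x) \<partial>lborel) = 0"
        using nn_integral_0_iff_AE[OF m2] by simp
      moreover have "AE t in lborel. t \<noteq> (0::real)" by (rule AE_lborel_singleton)
      ultimately have "AE t in lborel. (\<integral>\<^sup>+ x. indicator W (t,x) \<partial>lborel) = 0 \<and> t \<noteq> (0::real)"
        by (intro AE_conjI)
      then have "AE t in (lborel::real measure). False"
        by (rule eventually_mono) (metis pos order.irrefl)
      then have "emeasure lborel (UNIV::real set) = 0"
        using AE_iff_measurable[of UNIV lborel "\<lambda>_::real. False"] by simp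
      then show False by simp
    qed
  qed
  ultimately show False by (metis order.irrefl)
qed


lemma marg_measurable:
  fixes P :: "(real^'d::finite) \<times> real \<Rightarrow> real"
  assumes "is_density P"
  shows "marg P \<in> borel_measurable lborel"
proof -
  have "P \<in> borel_measurable (lborel \<Otimes>\<^sub>M lborel)"
    using assms unfolding is_density_def lborel_prod by simp
  then have "case_prod (\<lambda>x y. P (x, y)) \<in> borel_measurable (lborel \<Otimes>\<^sub>M lborel)"
    by simp
  then have "(\<lambda>x. \<integral>y. P (x, y) \<partial>lborel) \<in> borel_measurable lborel"
    by (rule lborel.borel_measurable_lebesgue_integral)
  then show ?thesis unfolding marg_def[abs_def] .
qed

lemma marg_ae:
  fixes P Q :: "(real^'d::finite) \<times> real \<Rightarrow> real"
  assumes "is_density P" "is_density Q" "\<forall>x. 0 < marg P x" "\<forall>x. 0 < marg Q x"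
    and "marg_measure P = marg_measure Q"
  shows "AE x in lborel. marg P x = marg Q x"
proof -
  have [measurable]: "marg P \<in> borel_measurable borel"
    using marg_measurable[OF assms(1)] by simp
  have [measurable]: "marg Q \<in> borel_measurable borel"
    using marg_measurable[OF assms(2)] by simp
  have "AE x in lborel. ennreal (marg P x) = ennreal (marg Q x)"
    using assms(5) unfolding marg_measure_def
    by (intro sigma_finite_measure.density_unique[OF sigma_finite_lborel]) auto
  then show ?thesis
    by (rule eventually_mono) (use assms(3,4) in \<open>simp add: less_imp_le\<close>)
qed

lemma int_y_marg:
  fixes P :: "(real^'d::finite) \<times> real \<Rightarrow> real"
  assumes "0 < marg P x"
  shows "(\<integral>y. y * P (x, y) \<partial>lborel) = marg P x * (\<integral>y. y * cond_dens P x y \<partial>lborel)"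
proof -
  have "(\<integral>y. y * cond_dens P x y \<partial>lborel) = (\<integral>y. y * P (x, y) / marg P x \<partial>lborel)"
    by (simp add: cond_dens_def)
  also have "\<dots> = (\<integral>y. y * P (x, y) \<partial>lborel) / marg P x"
    by (rule integral_divide_zero)
  finally show ?thesis using assms by simp
qed

lemma expect_generic:
  fixes P Q :: "(real^'d::finite) \<times> real \<Rightarrow> real"
  assumes dP: "is_density P" and dQ: "is_density Q"
    and mP: "\<forall>x. 0 < marg P x" and mQ: "\<forall>x. 0 < marg Q x"
    and eP: "has_expect_y P" and eQ: "has_expect_y Q"
    and mm: "marg_measure P = marg_measure Q"
    and cc: "\<forall>x. (\<integral>y. y * cond_dens P x y \<partial>lborel) = (\<integral>y. y * cond_dens Q x y \<partial>lborel)"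
  shows "expect_y P = expect_y Q"
proof -
  have iP: "integrable (lborel \<Otimes>\<^sub>M lborel) (\<lambda>z. snd z * P z)"
    using eP unfolding has_expect_y_def lborel_prod .
  have iQ: "integrable (lborel \<Otimes>\<^sub>M lborel) (\<lambda>z. snd z * Q z)"
    using eQ unfolding has_expect_y_def lborel_prod .
  have EP: "expect_y P = (\<integral>x. (\<integral>y. y * P (x, y) \<partial>lborel) \<partial>lborel)"
    using lborel_pair.integral_fst'[OF iP] unfolding expect_y_def lborel_prod by simp
  have EQ: "expect_y Q = (\<integral>x. (\<integral>y. y * Q (x, y) \<partial>lborel) \<partial>lborel)"
    using lborel_pair.integral_fst'[OF iQ] unfolding expect_y_def lborel_prod by simp
  have ae: "AE x in lborel. (\<integral>y. y * P (x, y) \<partial>lborel) = (\<integral>y. y * Q (x, y) \<partial>lborel)"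
    using marg_ae[OF dP dQ mP mQ mm]
    by (rule eventually_mono) (simp add: int_y_marg mP mQ cc)
  have "(\<lambda>z. snd z * P z) \<in> borel_measurable (lborel \<Otimes>\<^sub>M lborel)"
    using iP by (rule borel_measurable_integrable)
  then have "case_prod (\<lambda>x y. y * P (x, y)) \<in> borel_measurable (lborel \<Otimes>\<^sub>M lborel)"
    by (simp add: split_beta')
  then have m1: "(\<lambda>x. \<integral>y. y * P (x, y) \<partial>lborel) \<in> borel_measurable lborel"
    by (rule lborel.borel_measurable_lebesgue_integral)
  have "(\<lambda>z. snd z * Q z) \<in> borel_measurable (lborel \<Otimes>\<^sub>M lborel)"
    using iQ by (rule borel_measurable_integrable)
  then have "case_prod (\<lambda>x y. y * Q (x, y)) \<in> borel_measurable (lborel \<Otimes>\<^sub>M lborel)"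
    by (simp add: split_beta')
  then have m2: "(\<lambda>x. \<integral>y. y * Q (x, y) \<partial>lborel) \<in> borel_measurable lborel"
    by (rule lborel.borel_measurable_lebesgue_integral)
  show ?thesis unfolding EP EQ
    by (rule integral_cong_AE[OF m1 m2 ae])
qed


lemma cond_dens_int1:
  fixes P :: "(real^'d::finite) \<times> real \<Rightarrow> real"
  assumes "0 < marg P x"
  shows "(\<integral>y. cond_dens P x y \<partial>lborel) = 1"
proof -
  have "(\<integral>y. cond_dens P x y \<partial>lborel) = (\<integral>y. P (x, y) / marg P x \<partial>lborel)"
    by (simp add: cond_dens_def)
  also have "\<dots> = (\<integral>y. P (x, y) \<partial>lborel) / marg P x"
    by (rule integral_divide_zero)
  also have "\<dots> = 1" using assms by (simp add: marg_def)
  finally show ?thesis .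
qed

lemma cond_dens_nonneg:
  fixes P :: "(real^'d::finite) \<times> real \<Rightarrow> real"
  assumes "is_density P" "0 < marg P x"
  shows "0 \<le> cond_dens P x y"
  using assms unfolding is_density_def cond_dens_def by simp

lemma cond_eq_on_S:
  fixes P Q :: "(real^'d::finite) \<times> real \<Rightarrow> real"
  assumes "\<forall>y. P (x, y) = Q (x, y)"
  shows "cond_dens P x y = cond_dens Q x y"
  using assms by (simp add: cond_dens_def marg_def)

lemma poly_slice:
  fixes f :: "(real^'d::finite) \<times> real \<Rightarrow> real"
  assumes "real_polynomial_function f"
  shows "real_polynomial_function (\<lambda>x. f (x, y))"
proof -
  have bl: "bounded_linear (\<lambda>x::real^'d. (x, 0::real))"
    by (rule bounded_linear_Pair[OF bounded_linear_ident bounded_linear_zero])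
  have "polynomial_function (\<lambda>x::real^'d. (x, 0::real) + (0, y))"
    by (rule polynomial_function_add[OF polynomial_function_bounded_linear[OF bl] polynomial_function_const])
  then have "polynomial_function (\<lambda>x::real^'d. (x, y))" by simp
  then have "real_polynomial_function (f \<circ> (\<lambda>x::real^'d. (x, y)))"
    using assms by (rule real_polynomial_function_compose)
  then show ?thesis by (simp add: comp_def)
qed

lemma class2:
  fixes P Q :: "(real^'d::finite) \<times> real \<Rightarrow> real"
  assumes P: "P \<in> poly_expect_class" and Q: "Q \<in> poly_expect_class"
    and eP: "has_expect_y P" and eQ: "has_expect_y Q"
    and mm: "marg_measure P = marg_measure Q"
    and S: "S \<in> sets lebesgue" and Spos: "emeasure lebesgue S > 0"
    and PQ: "\<forall>x\<in>S. \<forall>y. P (x, y) = Q (x, y)"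
  shows "expect_y P = expect_y Q"
proof -
  obtain fP where dP: "is_density P" and mP: "\<forall>x. 0 < marg P x"
    and pfP: "real_polynomial_function fP"
    and fP: "\<forall>x. (\<integral>y. y * cond_dens P x y \<partial>lborel) = fP x"
    using P unfolding poly_expect_class_def by blast
  obtain fQ where dQ: "is_density Q" and mQ: "\<forall>x. 0 < marg Q x"
    and pfQ: "real_polynomial_function fQ"
    and fQ: "\<forall>x. (\<integral>y. y * cond_dens Q x y \<partial>lborel) = fQ x"
    using Q unfolding poly_expect_class_def by blast
  have "\<forall>x\<in>S. fP x - fQ x = 0"
  proof
    fix x assume "x \<in> S"
    then have "cond_dens P x y = cond_dens Q x y" for y
      using PQ by (intro cond_eq_on_S) blast
    then have "(\<integral>y. y * cond_dens P x y \<partial>lborel) = (\<integral>y. y * cond_dens Q x y \<partial>lborel)"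
      by simp
    then show "fP x - fQ x = 0" using fP fQ by simp
  qed
  moreover have "real_polynomial_function (\<lambda>x. fP x - fQ x)"
    using pfP pfQ by (rule real_polynomial_function_diff)
  ultimately have z: "fP x - fQ x = 0" for x
    using poly_zero_pos_measure[OF _ S Spos] by blast
  show ?thesis
    by (rule expect_generic[OF dP dQ mP mQ eP eQ mm]) (use z fP fQ in simp)
qed

lemma kpos:
  fixes P :: "(real^'d::finite) \<times> real \<Rightarrow> real"
  assumes "is_density P" "0 < marg P x" "\<forall>y. cond_dens P x y = k * exp (g y)"
  shows "0 < k"
proof -
  have "0 \<le> k * exp (g 0)" using cond_dens_nonneg[OF assms(1,2), of 0] assms(3) by simp
  then have "0 \<le> k" by (simp add: zero_le_mult_iff)
  moreover have "k \<noteq> 0"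
  proof
    assume "k = 0"
    then have "(\<integral>y. cond_dens P x y \<partial>lborel) = 0" using assms(3) by simp
    then show False using cond_dens_int1[OF assms(2)] by simp
  qed
  ultimately show ?thesis by simp
qed

lemma class1:
  fixes P Q :: "(real^'d::finite) \<times> real \<Rightarrow> real"
  assumes P: "P \<in> poly_logdens_class" and Q: "Q \<in> poly_logdens_class"
    and eP: "has_expect_y P" and eQ: "has_expect_y Q"
    and mm: "marg_measure P = marg_measure Q"
    and S: "S \<in> sets lebesgue" and Spos: "emeasure lebesgue S > 0"
    and PQ: "\<forall>x\<in>S. \<forall>y. P (x, y) = Q (x, y)"
  shows "expect_y P = expect_y Q"
proof -
  obtain fP kP where dP: "is_density P" and mP: "\<forall>x. 0 < marg P x"
    and pfP: "real_polynomial_function fP"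
    and fP: "\<forall>x y. cond_dens P x y = kP x * exp (fP (x, y))"
    using P unfolding poly_logdens_class_def by blast
  obtain fQ kQ where dQ: "is_density Q" and mQ: "\<forall>x. 0 < marg Q x"
    and pfQ: "real_polynomial_function fQ"
    and fQ: "\<forall>x y. cond_dens Q x y = kQ x * exp (fQ (x, y))"
    using Q unfolding poly_logdens_class_def by blast
  have kP: "0 < kP x" for x
    using kpos[OF dP, of x "kP x" "\<lambda>y. fP (x, y)"] mP fP by blast
  have kQ: "0 < kQ x" for x
    using kpos[OF dQ, of x "kQ x" "\<lambda>y. fQ (x, y)"] mQ fQ by blast
  have onS: "(fP (x, y) - fQ (x, y)) - (fP (x, 0) - fQ (x, 0)) = 0" if x: "x \<in> S" for x y
  proof -
    have ln_eq: "fP (x, y) - fQ (x, y) = ln (kQ x) - ln (kP x)" for y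
    proof -
      have "cond_dens P x y = cond_dens Q x y"
        using PQ x by (intro cond_eq_on_S) blast
      then have "kP x * exp (fP (x, y)) = kQ x * exp (fQ (x, y))" using fP fQ by simp
      then have "ln (kP x * exp (fP (x, y))) = ln (kQ x * exp (fQ (x, y)))" by simp
      then have "ln (kP x) + fP (x, y) = ln (kQ x) + fQ (x, y)"
        using kP[of x] kQ[of x] by (simp add: ln_mult)
      then show ?thesis by simp
    qed
    show ?thesis using ln_eq[of y] ln_eq[of 0] by simp
  qed
  have pg: "real_polynomial_function (\<lambda>x. (fP (x, y) - fQ (x, y)) - (fP (x, 0) - fQ (x, 0)))" for y
    using poly_slice[OF pfP] poly_slice[OF pfQ] by (intro real_polynomial_function_diff) auto
  have allx: "fP (x, y) - fQ (x, y) = fP (x, 0) - fQ (x, 0)" for x y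
  proof -
    have "(fP (x, y) - fQ (x, y)) - (fP (x, 0) - fQ (x, 0)) = 0"
      using poly_zero_pos_measure[OF pg S Spos] onS by blast
    then show ?thesis by simp
  qed
  have cond_eq: "cond_dens P x = cond_dens Q x" for x
  proof -
    define r where "r = kP x * exp (fP (x, 0) - fQ (x, 0)) / kQ x"
    have eqr: "cond_dens P x y = r * cond_dens Q x y" for y
    proof -
      have "fP (x, y) = fQ (x, y) + (fP (x, 0) - fQ (x, 0))" using allx[of x y] by simp
      then have "exp (fP (x, y)) = exp (fQ (x, y)) * exp (fP (x, 0) - fQ (x, 0))"
        by (simp add: exp_add)
      then show ?thesis using fP fQ kQ[of x] unfolding r_def by (simp add: field_simps)
    qed
    have "1 = (\<integral>y. cond_dens P x y \<partial>lborel)" using cond_dens_int1 mP by metis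
    also have "\<dots> = (\<integral>y. r * cond_dens Q x y \<partial>lborel)" using eqr by simp
    also have "\<dots> = r * (\<integral>y. cond_dens Q x y \<partial>lborel)" by (rule integral_mult_right_zero)
    also have "\<dots> = r" using cond_dens_int1 mQ by (metis mult.right_neutral)
    finally have "r = 1" by simp
    then show ?thesis using eqr by (simp add: fun_eq_iff)
  qed
  show ?thesis
    by (rule expect_generic[OF dP dQ mP mQ eP eQ mm]) (simp add: cond_eq)
qed

theorem lemma4p6:
  fixes c :: real
  assumes "0 < c" and "c < 1/2"
  shows "condition3 c (poly_logdens_class :: ((real^'d::finite) \<times> real \<Rightarrow> real) set)
       \<and> condition3 c (poly_expect_class :: ((real^'d::finite) \<times> real \<Rightarrow> real) set)"
proof -
  have cpos: "\<And>S. ennreal c \<le> emeasure lebesgue S \<Longrightarrow> 0 < emeasure lebesgue S"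
    using assms(1) by (metis ennreal_less_zero_iff order_less_le_trans)
  show ?thesis
    unfolding condition3_def
  proof (intro conjI ballI impI)
    fix P Q :: "(real^'d::finite) \<times> real \<Rightarrow> real"
    assume PQ: "P \<in> poly_logdens_class" "Q \<in> poly_logdens_class"
      and h: "has_expect_y P \<and> has_expect_y Q \<and> expect_y P \<noteq> expect_y Q"
    show "marg_measure P \<noteq> marg_measure Q \<or>
        \<not> (\<exists>S\<in>sets lebesgue. ennreal c \<le> emeasure lebesgue S \<and> (\<forall>x\<in>S. \<forall>y. P (x, y) = Q (x, y)))"
    proof (rule ccontr)
      assume "\<not> ?thesis"
      then obtain S where "marg_measure P = marg_measure Q" "S \<in> sets lebesgue"
        "ennreal c \<le> emeasure lebesgue S" "\<forall>x\<in>S. \<forall>y. P (x, y) = Q (x, y)" by blast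
      then have "expect_y P = expect_y Q"
        using class1[OF PQ] h cpos by blast
      then show False using h by blast
    qed
  next
    fix P Q :: "(real^'d::finite) \<times> real \<Rightarrow> real"
    assume PQ: "P \<in> poly_expect_class" "Q \<in> poly_expect_class"
      and h: "has_expect_y P \<and> has_expect_y Q \<and> expect_y P \<noteq> expect_y Q"
    show "marg_measure P \<noteq> marg_measure Q \<or>
        \<not> (\<exists>S\<in>sets lebesgue. ennreal c \<le> emeasure lebesgue S \<and> (\<forall>x\<in>S. \<forall>y. P (x, y) = Q (x, y)))"
    proof (rule ccontr)
      assume "\<not> ?thesis"
      then obtain S where "marg_measure P = marg_measure Q" "S \<in> sets lebesgue"
        "ennreal c \<le> emeasure lebesgue S" "\<forall>x\<in>S. \<forall>y. P (x, y) = Q (x, y)" by blast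
      then have "expect_y P = expect_y Q"
        using class2[OF PQ] h cpos by blast
      then show False using h by blast
    qed
  qed
qed

end
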